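(* For every integer $n\ge0$, $$B^{(c)}_{n,\lambda}(x,y)=\sum_{m=0}^{n}\sum_{k=0}^{m}\sum_{l=0}^{\lfloor k/2\rfloor}\binom{n}{m}\binom{k}{2l}(-1)^l\lambda^{n-k}S_1(m,k)\,b_{n-m}\,B_{k-2l}(x)\,y^{2l}.$$ Furthermore, for every integer $n\ge1$, $$B^{(s)}_{n,\lambda}(x,y)=\sum_{m=0}^{n}\sum_{k=0}^{m}\sum_{l=0}^{\lfloor (k-1)/2\rfloor}\binom{n}{m}\binom{k}{2l+1}(-1)^l\lambda^{n-k}S_1(m,k)\,b_{n-m}\,B_{k-2l-1}(x)\,y^{2l+1},$$ where an inner sum with upper limit $-1$ is empty.
   Context: Let $\lambda$ be a nonzero real number; generating functions are formal power series in $t$. $e_\lambda^{x}(t)=(1+\lambda t)^{x/\lambda}$, $\cos_\lambda^{(y)}(t)=\cos\!\big(\tfrac{y}{\lambda}\log(1+\lambda t)\big)$, $\sin_\lambda^{(y)}(t)=\sin\!\big(\tfrac{y}{\lambda}\log(1+\lambda t)\big)$. The type 2 degenerate cosine-Bernoulli and sine-Bernoulli polynomials are defined by $\frac{t}{e_\lambda^{1/2}(t)-e_\lambda^{-1/2}(t)}e_\lambda^{x}(t)\cos_\lambda^{(y)}(t)=\sum_{n\ge0}B^{(c)}_{n,\lambda}(x,y)\frac{t^n}{n!}$ and the same with $\sin_\lambda^{(y)}(t)$ giving $B^{(s)}_{n,\lambda}(x,y)$. The (non-degenerate) type 2 Bernoulli polynomials are defined by $\frac{t}{e^{t/2}-e^{-t/2}}e^{xt}=\sum_{n\ge0}B_n(x)\frac{t^n}{n!}$.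 The Bernoulli numbers of the second kind $b_n$ are defined by $\frac{t}{\log(1+t)}=\sum_{n\ge0}b_n\frac{t^n}{n!}$. $S_1(n,k)$ are the signed Stirling numbers of the first kind, $\frac{1}{k!}(\log(1+t))^k=\sum_{n\ge k}S_1(n,k)\frac{t^n}{n!}$. *)

theory Defs
  imports "HOL-Computational_Algebra.Formal_Power_Series"
begin

definition dlog :: "real \<Rightarrow> real fps" where
  "dlog lam = fps_ln 1 oo (fps_const lam * fps_X)"

text \<open>degenerate exponential e_lam^x(t) = (1 + lam t)^(x/lam)\<close>
definition dexp :: "real \<Rightarrow> real \<Rightarrow> real fps" where
  "dexp lam x = fps_binomial (x / lam) oo (fps_const lam * fps_X)"

definition dcos :: "real \<Rightarrow> real \<Rightarrow> real fps" where
  "dcos lam y = fps_cos (y / lam) oo dlog lam"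

definition dsin :: "real \<Rightarrow> real \<Rightarrow> real fps" where
  "dsin lam y = fps_sin (y / lam) oo dlog lam"

definition dfactor :: "real \<Rightarrow> real fps" where
  "dfactor lam = fps_X / (dexp lam (1/2) - dexp lam (-1/2))"

definition cos_bernoulli :: "nat \<Rightarrow> real \<Rightarrow> real \<Rightarrow> real \<Rightarrow> real" where
  "cos_bernoulli n lam x y = fact n * fps_nth (dfactor lam * dexp lam x * dcos lam y) n"

definition sin_bernoulli :: "nat \<Rightarrow> real \<Rightarrow> real \<Rightarrow> real \<Rightarrow> real" where
  "sin_bernoulli n lam x y = fact n * fps_nth (dfactor lam * dexp lam x * dsin lam y) n"

definition bernoulli2 :: "nat \<Rightarrow> real \<Rightarrow> real" where
  "bernoulli2 n x = fact n * fps_nth (fps_X / (fps_exp (1/2) - fps_exp (-1/2)) * fps_exp x) n"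

definition bernoulli_2nd :: "nat \<Rightarrow> real" where
  "bernoulli_2nd n = fact n * fps_nth (fps_X / fps_ln 1) n"

text \<open>Signed Stirling numbers of the first kind: (log(1+t))^k / k!\<close>
definition stirling1 :: "nat \<Rightarrow> nat \<Rightarrow> real" where
  "stirling1 n k = fact n * fps_nth (fps_ln 1 ^ k / fps_const (fact k)) n"

end

theory Submission imports Defs begin

lemma binom_exp_ln: "fps_binomial (a::real) = fps_exp a oo fps_ln 1"
proof -
  let ?g = "fps_exp a oo fps_ln (1::real)"
  have d: "fps_deriv ?g = fps_const a * ?g / (1 + fps_X)"
    by (simp add: fps_compose_deriv fps_ln_deriv fps_divide_unit fps_const_mult_apply_left[symmetric] mult.assoc)
  have "fps_nth ?g 0 = 1" by simp
  with d show ?thesis using fps_binomial_ODE_unique'[of ?g a] by simp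
qed

definition sf :: "real \<Rightarrow> real fps" where
  "sf lam = fps_const (1/lam) * dlog lam"

lemma dlog0[simp]: "fps_nth (dlog lam) 0 = 0"
  by (simp add: dlog_def)

lemma sf0[simp]: "fps_nth (sf lam) 0 = 0"
  by (simp add: sf_def)

lemma sf_alt: "sf lam = (fps_const (1/lam) * fps_X) oo dlog lam"
  by (simp add: sf_def fps_const_mult_apply_left[symmetric])

lemma dexp_alt: assumes "lam \<noteq> 0" shows "dexp lam x = fps_exp x oo sf lam"
proof -
  have "fps_exp x oo sf lam = (fps_exp x oo (fps_const (1/lam) * fps_X)) oo dlog lam"
    by (simp add: sf_alt fps_compose_assoc)
  also have "\<dots> = fps_exp (x/lam) oo (fps_ln 1 oo (fps_const lam * fps_X))"
    by (simp add: dlog_def)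
  also have "\<dots> = fps_binomial (x/lam) oo (fps_const lam * fps_X)"
    by (simp add: fps_compose_assoc binom_exp_ln)
  finally show ?thesis by (simp add: dexp_def)
qed

lemma dcos_alt: assumes "lam \<noteq> 0" shows "dcos lam y = fps_cos y oo sf lam"
proof -
  have "fps_cos y oo sf lam = (fps_cos y oo (fps_const (1/lam) * fps_X)) oo dlog lam"
    by (simp add: sf_alt fps_compose_assoc)
  also have "fps_cos y oo (fps_const (1/lam) * fps_X) = fps_cos (y/lam)"
    by (simp add: fps_eq_iff fps_cos_def power_divide)
  finally show ?thesis by (simp add: dcos_def)
qed

lemma dsin_alt: assumes "lam \<noteq> 0" shows "dsin lam y = fps_sin y oo sf lam"
proof -
  have "fps_sin y oo sf lam = (fps_sin y oo (fps_const (1/lam) * fps_X)) oo dlog lam"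
    by (simp add: sf_alt fps_compose_assoc)
  also have "fps_sin y oo (fps_const (1/lam) * fps_X) = fps_sin (y/lam)"
    by (simp add: fps_eq_iff fps_sin_def power_divide)
  finally show ?thesis by (simp add: dsin_def)
qed


lemma divX: fixes w :: "real fps" assumes "fps_nth w 0 \<noteq> 0"
  shows "fps_X / (fps_X * w) = inverse w"
proof -
  have nz: "fps_X * w \<noteq> 0" using assms by (metis fps_X_neq_zero fps_nonzero_nth mult_eq_0_iff)
  have "inverse w * w = 1" using inverse_mult_eq_1 assms by blast
  hence "fps_X = inverse w * (fps_X * w)"
    by (metis mult.left_commute mult_1_right)
  hence "fps_X / (fps_X * w) = (inverse w * (fps_X * w)) / (fps_X * w)" by simp
  also have "\<dots> = inverse w" using nz by simp
  finally show ?thesis .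
qed

lemma shiftX: fixes f :: "real fps" assumes "fps_nth f 0 = 0" shows "f = fps_X * fps_shift 1 f"
  using assms by (intro fps_ext) (simp add: fps_X_mult_nth)

definition Dp :: "real fps" where
  "Dp = fps_shift 1 (fps_exp (1/2) - fps_exp (-1/2))"

lemma Dp0: "fps_nth Dp 0 = 1" by (simp add: Dp_def)

lemma Dp_eq: "fps_exp (1/2) - fps_exp (-1/2) = fps_X * (Dp :: real fps)"
  unfolding Dp_def by (rule shiftX) simp

definition sp :: "real \<Rightarrow> real fps" where
  "sp lam = fps_shift 1 (sf lam)"

lemma sf_eq: "sf lam = fps_X * sp lam"
  unfolding sp_def by (rule shiftX) simp

lemma sp0: assumes "lam \<noteq> 0" shows "fps_nth (sp lam) 0 = 1"
  using assms by (simp add: sp_def sf_def dlog_def fps_ln_nth)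

lemma bern2_alt: "bernoulli2 n x = fact n * fps_nth (inverse Dp * fps_exp x) n"
  unfolding bernoulli2_def Dp_eq by (simp add: divX Dp0)

lemma dfactor_alt: assumes "lam \<noteq> 0"
  shows "dfactor lam = inverse (sp lam) * (inverse Dp oo sf lam)"
proof -
  have "dexp lam (1/2) - dexp lam (-1/2) = (fps_exp (1/2) - fps_exp (-1/2)) oo sf lam"
    using assms by (simp only: dexp_alt[OF assms] fps_compose_sub_distrib)
  also have "\<dots> = fps_X * (sp lam * (Dp oo sf lam))"
    unfolding Dp_eq by (simp add: fps_compose_mult_distrib sf_eq[symmetric] mult.assoc)
  finally have "dfactor lam = inverse (sp lam * (Dp oo sf lam))"
    unfolding dfactor_def using assms by (simp add: divX sp0 Dp0)
  also have "\<dots> = inverse (sp lam) * (inverse Dp oo sf lam)"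
    by (simp add: fps_inverse_mult fps_inverse_compose Dp0)
  finally show ?thesis .
qed

definition Lp :: "real fps" where "Lp = fps_shift 1 (fps_ln 1)"

lemma Lp0: "fps_nth Lp 0 = 1" by (simp add: Lp_def fps_ln_nth)

lemma Lp_eq: "fps_ln 1 = fps_X * (Lp :: real fps)"
  unfolding Lp_def by (rule shiftX) simp

lemma bern_2nd_alt: "bernoulli_2nd n = fact n * fps_nth (inverse Lp) n"
  by (simp add: bernoulli_2nd_def Lp_eq divX Lp0)

lemma sp_eq: assumes "lam \<noteq> 0" shows "sp lam = Lp oo (fps_const lam * fps_X)"
  using assms by (simp add: fps_eq_iff sp_def sf_def dlog_def Lp_def)

lemma inv_sp_nth: assumes "lam \<noteq> 0"
  shows "fps_nth (inverse (sp lam)) n = lam ^ n * bernoulli_2nd n / fact n"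
  using assms by (simp add: sp_eq fps_inverse_compose[symmetric] Lp0 bern_2nd_alt)

lemma sf_pow_nth: assumes "lam \<noteq> 0"
  shows "fps_nth (sf lam ^ k) m = (1/lam)^k * lam^m * stirling1 m k * fact k / fact m"
proof -
  have "sf lam ^ k = fps_const ((1/lam)^k) * (fps_ln 1 ^ k oo (fps_const lam * fps_X))"
    by (simp add: sf_def dlog_def power_mult_distrib fps_compose_power fps_const_power)
  thus ?thesis by (simp add: stirling1_def)
qed


lemma term_eq: fixes lam h S b :: real assumes "lam \<noteq> 0" "k \<le> m" "m \<le> n"
  shows "fact n * (h * ((1/lam)^k * lam^m * S * fact k / fact m)) * (lam^(n-m) * b / fact (n-m))
       = real (n choose m) * lam^(n-k) * S * b * (fact k * h)"
proof -
  have bin: "real (n choose m) = fact n / (fact m * fact (n-m))"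
    using assms by (simp add: binomial_fact)
  have p: "(1/lam)^k * lam^m * lam^(n-m) = lam^(n-k)"
  proof -
    have "lam^m * lam^(n-m) = lam^(n-k) * lam^k"
      using assms by (simp add: power_add[symmetric])
    thus ?thesis using assms by (simp add: power_one_over field_simps)
  qed
  have "fact n * (h * ((1/lam)^k * lam^m * S * fact k / fact m)) * (lam^(n-m) * b / fact (n-m))
     = (fact n / (fact m * fact (n-m))) * ((1/lam)^k * lam^m * lam^(n-m)) * S * b * (fact k * h)"
    by (simp add: divide_simps)
  thus ?thesis unfolding bin p .
qed

lemma main: assumes "lam \<noteq> 0"
  shows "fact n * fps_nth (dfactor lam * dexp lam x * (T oo sf lam)) n =
    (\<Sum>m=0..n. \<Sum>k=0..m. real (n choose m) * lam^(n-k) * stirling1 m k * bernoulli_2nd (n-m)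
        * (fact k * fps_nth (inverse Dp * fps_exp x * T) k))"
proof -
  define H where "H = inverse Dp * fps_exp x * T"
  have "dfactor lam * dexp lam x * (T oo sf lam) = (H oo sf lam) * inverse (sp lam)"
    using assms by (simp add: H_def dfactor_alt dexp_alt fps_compose_mult_distrib mult_ac)
  hence "fact n * fps_nth (dfactor lam * dexp lam x * (T oo sf lam)) n
     = (\<Sum>m=0..n. \<Sum>k=0..m. fact n * (fps_nth H k * fps_nth (sf lam ^ k) m) * fps_nth (inverse (sp lam)) (n-m))"
    by (simp only: fps_mult_nth fps_compose_nth sum_distrib_left sum_distrib_right mult.assoc)
  also have "\<dots> = (\<Sum>m=0..n. \<Sum>k=0..m. fact n * (fps_nth H k * ((1/lam)^k * lam^m * stirling1 m k * fact k / fact m))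
          * (lam^(n-m) * bernoulli_2nd (n-m) / fact (n-m)))"
    by (simp only: sf_pow_nth[OF assms] inv_sp_nth[OF assms])
  also have "\<dots> = (\<Sum>m=0..n. \<Sum>k=0..m. real (n choose m) * lam^(n-k) * stirling1 m k * bernoulli_2nd (n-m)
        * (fact k * fps_nth H k))"
    by (rule sum.cong[OF refl], rule sum.cong[OF refl], rule term_eq[OF assms]) auto
  finally show ?thesis by (simp add: H_def)
qed

lemma sum_even: fixes f :: "nat \<Rightarrow> real"
  shows "(\<Sum>i=0..k. if even i then f i else 0) = (\<Sum>l=0..k div 2. f (2*l))"
proof -
  have im: "(\<lambda>l. 2*l) ` {0..k div 2} = {i\<in>{0..k}. even i}"
    by (auto simp: image_iff elim!: evenE)
  have "(\<Sum>l=0..k div 2. f (2*l)) = (\<Sum>i\<in>(\<lambda>l. 2*l) ` {0..k div 2}. f i)"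
    by (subst sum.reindex) (auto simp: inj_on_def)
  also have "\<dots> = (\<Sum>i=0..k. if even i then f i else 0)"
    unfolding im by (subst sum.inter_filter) auto
  finally show ?thesis ..
qed

lemma sum_odd: fixes f :: "nat \<Rightarrow> real"
  shows "(\<Sum>i=0..k. if even i then 0 else f i) = (\<Sum>l<(k+1) div 2. f (2*l+1))"
proof -
  have im: "(\<lambda>l. 2*l+1) ` {..<(k+1) div 2} = {i\<in>{0..k}. odd i}"
    by (auto simp: image_iff elim!: oddE)
  have "(\<Sum>l<(k+1) div 2. f (2*l+1)) = (\<Sum>i\<in>(\<lambda>l. 2*l+1) ` {..<(k+1) div 2}. f i)"
    by (subst sum.reindex) (auto simp: inj_on_def)
  also have "\<dots> = (\<Sum>i=0..k. if even i then 0 else f i)"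
    unfolding im by (subst sum.inter_filter) (auto intro!: sum.cong)
  finally show ?thesis ..
qed


lemma cos_coef:
  "fact k * fps_nth (inverse Dp * fps_exp x * fps_cos y) k =
   (\<Sum>l=0..k div 2. real (k choose (2*l)) * (-1)^l * bernoulli2 (k-2*l) x * y^(2*l))"
proof -
  define G where "G = inverse Dp * fps_exp x"
  define f where "f i = fact k * ((-1)^(i div 2) * y^i / fact i) * fps_nth G (k-i)" for i
  have "fact k * fps_nth (G * fps_cos y) k = (\<Sum>i=0..k. fact k * (fps_nth (fps_cos y) i * fps_nth G (k-i)))"
    by (simp only: mult.commute[of G] fps_mult_nth sum_distrib_left)
  also have "\<dots> = (\<Sum>i=0..k. if even i then f i else 0)"
    by (rule sum.cong) (auto simp: fps_cos_def f_def)
  also have "\<dots> = (\<Sum>l=0..k div 2. f (2*l))" by (rule sum_even)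
  also have "\<dots> = (\<Sum>l=0..k div 2. real (k choose (2*l)) * (-1)^l * bernoulli2 (k-2*l) x * y^(2*l))"
  proof (rule sum.cong[OF refl])
    fix l assume "l \<in> {0..k div 2}"
    hence le: "2*l \<le> k" by auto
    show "f (2*l) = real (k choose (2*l)) * (-1)^l * bernoulli2 (k-2*l) x * y^(2*l)"
      using le by (simp add: f_def bern2_alt G_def binomial_fact divide_simps)
  qed
  finally show ?thesis by (simp add: G_def)
qed

lemma sin_coef:
  "fact k * fps_nth (inverse Dp * fps_exp x * fps_sin y) k =
   (\<Sum>l<(k+1) div 2. real (k choose (2*l+1)) * (-1)^l * bernoulli2 (k-2*l-1) x * y^(2*l+1))"
proof -
  define G where "G = inverse Dp * fps_exp x"
  define f where "f i = fact k * ((-1)^((i - 1) div 2) * y^i / fact i) * fps_nth G (k-i)" for i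
  have "fact k * fps_nth (G * fps_sin y) k = (\<Sum>i=0..k. fact k * (fps_nth (fps_sin y) i * fps_nth G (k-i)))"
    by (simp only: mult.commute[of G] fps_mult_nth sum_distrib_left)
  also have "\<dots> = (\<Sum>i=0..k. if even i then 0 else f i)"
    by (rule sum.cong) (auto simp: fps_sin_def f_def)
  also have "\<dots> = (\<Sum>l<(k+1) div 2. f (2*l+1))" by (rule sum_odd)
  also have "\<dots> = (\<Sum>l<(k+1) div 2. real (k choose (2*l+1)) * (-1)^l * bernoulli2 (k-2*l-1) x * y^(2*l+1))"
  proof (rule sum.cong[OF refl])
    fix l assume "l \<in> {..<(k+1) div 2}"
    hence le: "2*l+1 \<le> k" by auto
    have e: "k - 2*l - 1 = k - (2*l+1)" by simp
    show "f (2*l+1) = real (k choose (2*l+1)) * (-1)^l * bernoulli2 (k-2*l-1) x * y^(2*l+1)"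
      unfolding e using le by (simp add: f_def bern2_alt G_def binomial_fact divide_simps del: fact_Suc)
  qed
  finally show ?thesis by (simp add: G_def)
qed

theorem theorem2p6:
  fixes lam x y :: real
  assumes "lam \<noteq> 0"
  shows "(\<forall>n. cos_bernoulli n lam x y =
            (\<Sum>m=0..n. \<Sum>k=0..m. \<Sum>l=0..k div 2.
               real (n choose m) * real (k choose (2*l)) * (-1)^l * lam^(n-k)
               * stirling1 m k * bernoulli_2nd (n-m) * bernoulli2 (k-2*l) x * y^(2*l)))
       \<and> (\<forall>n\<ge>1. sin_bernoulli n lam x y =
            (\<Sum>m=0..n. \<Sum>k=0..m. \<Sum>l<(k+1) div 2.
               real (n choose m) * real (k choose (2*l+1)) * (-1)^l * lam^(n-k)
               * stirling1 m k * bernoulli_2nd (n-m) * bernoulli2 (k-2*l-1) x * y^(2*l+1)))"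
proof safe
  fix n
  show "cos_bernoulli n lam x y =
            (\<Sum>m=0..n. \<Sum>k=0..m. \<Sum>l=0..k div 2.
               real (n choose m) * real (k choose (2*l)) * (-1)^l * lam^(n-k)
               * stirling1 m k * bernoulli_2nd (n-m) * bernoulli2 (k-2*l) x * y^(2*l))"
    unfolding cos_bernoulli_def dcos_alt[OF assms] main[OF assms] cos_coef
    by (simp add: sum_distrib_left mult_ac)
next
  fix n :: nat
  show "sin_bernoulli n lam x y =
            (\<Sum>m=0..n. \<Sum>k=0..m. \<Sum>l<(k+1) div 2.
               real (n choose m) * real (k choose (2*l+1)) * (-1)^l * lam^(n-k)
               * stirling1 m k * bernoulli_2nd (n-m) * bernoulli2 (k-2*l-1) x * y^(2*l+1))"
    unfolding sin_bernoulli_def dsin_alt[OF assms] main[OF assms] sin_coef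
    by (simp add: sum_distrib_left mult_ac)
qed

end
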